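(* In the truncated Gale–Shapley algorithm described in the context, with a weight function $w$ respecting the preferences, for every $i\ge 2$ we have $f_i(R)\le w(L_i)-w(L_{i-1})$.
   Context: Instance: a simple bipartite graph $\mathcal{G}=(R\cup B,E)$ (red nodes $R$, blue nodes $B$) without isolated nodes, each node having a linear preference order on its neighbours. Algorithm (distributed Gale–Shapley): each blue $b$ keeps $p(b)$ (current partner or $\bot$), initially $\bot$. Each red $r$ keeps a list $C(r)$, initially all neighbours in decreasing preference; $c(r)$ (candidate awaiting response, or $\bot$), initially $\bot$; $p(r)$ (partner or $\bot$), initially $\bot$. Each round consists of a blue turn then a red turn. Blue turn, for each $b$: let $P$ be the set of neighbours that sent `propose'; if $P=\emptyset$ do nothing. Otherwise let $Q=P\cup\{p(b)\}$ if $p(b)\ne\bot$, else $Q=P$; let $q$ be $b$'s most preferred node in $Q$; if $q\ne p(b)$, send `break' to $p(b)$ (if $p(b)\ne\bot$), send `accept' to $q$, and set $p(b)\gets q$; send `reject' to every $r\in P\setminus\{q\}$. Red turn, for each $r$: (1) if $c(r)\neq\bot$, receive the message from $c(r)$; if `accept' set $p(r)\gets c(r)$; if `reject' remove $c(r)$ from $C(r)$; then set $c(r)\gets\bot$. (2) If $p(r)\ne\bot$ and $p(r)$ sent `break', remove $p(r)$ from $C(r)$ and set $p(r)\gets\bot$. (3) If $p(r)=\bot$ and $C(r)$ is nonempty, set $c(r)$ to the first element of $C(r)$ and send `propose' to it. Notation: a subscript $i$ denotes the value at the end of round $i$. An edge $\{r,b\}$ is lost when $r$ removes $b$ from $C(r)$;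 $L_i\subseteq E$ is the set of edges lost by the end of round $i$. Let $w:E\to\mathbb{Z}_{>0}$ be a weight function respecting preferences: whenever a node $v$ prefers $x$ over $y$, $w(\{v,x\})\ge w(\{v,y\})$; $w(F)=\sum_{e\in F}w(e)$. The potential of $r\in R$ at the end of round $i$ is $f_i(r)=0$ if $r$ is matched ($p_i(r)\neq\bot$) or $C_i(r)$ is empty, and otherwise $f_i(r)=w(\{r,b\})$ where $b$ is the first element of $C_i(r)$; $f_i(R)=\sum_{r\in R}f_i(r)$. *)

theory Defs
  imports Main
begin

text \<open>The preference of node v is the list pref v of its
  neighbours in decreasing order of preference (first = most preferred).
  A single partner map prt is used for all nodes (p(b) for blue b, p(r) for red r);
  lst r is the list C(r) of a red node; cnd r is c(r); lost accumulates the
  lost edges (edges {r,b} such that r removed b from C(r)).\<close>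

record 'v gs_state =
  prt  :: "'v \<Rightarrow> 'v option"
  lst  :: "'v \<Rightarrow> 'v list"
  cnd  :: "'v \<Rightarrow> 'v option"
  lost :: "'v set set"

definition prefers :: "('v \<Rightarrow> 'v list) \<Rightarrow> 'v \<Rightarrow> 'v \<Rightarrow> 'v \<Rightarrow> bool" where
  "prefers pref v x y \<longleftrightarrow>
     (\<exists>i j. i < j \<and> j < length (pref v) \<and> pref v ! i = x \<and> pref v ! j = y)"

definition most_preferred :: "('v \<Rightarrow> 'v list) \<Rightarrow> 'v \<Rightarrow> 'v set \<Rightarrow> 'v" where
  "most_preferred pref v X = (THE q. q \<in> X \<and> (\<forall>y\<in>X. y \<noteq> q \<longrightarrow> prefers pref v q y))"

text \<open>Blue turn: the reds that sent `propose' to b are those whose candidate is b.\<close>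
definition proposers :: "'v set \<Rightarrow> ('v, 'z) gs_state_scheme \<Rightarrow> 'v \<Rightarrow> 'v set" where
  "proposers R s b = {r \<in> R. cnd s r = Some b}"

definition blue_choice :: "'v set \<Rightarrow> ('v \<Rightarrow> 'v list) \<Rightarrow> ('v, 'z) gs_state_scheme \<Rightarrow> 'v \<Rightarrow> 'v" where
  "blue_choice R pref s b = most_preferred pref b (proposers R s b \<union> set_option (prt s b))"

definition sends_accept :: "'v set \<Rightarrow> 'v set \<Rightarrow> ('v \<Rightarrow> 'v list) \<Rightarrow> ('v, 'z) gs_state_scheme \<Rightarrow> 'v \<Rightarrow> 'v \<Rightarrow> bool" where
  "sends_accept R B pref s b r \<longleftrightarrow> b \<in> B \<and> proposers R s b \<noteq> {} \<and>
     Some (blue_choice R pref s b) \<noteq> prt s b \<and> r = blue_choice R pref s b"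

definition sends_reject :: "'v set \<Rightarrow> 'v set \<Rightarrow> ('v \<Rightarrow> 'v list) \<Rightarrow> ('v, 'z) gs_state_scheme \<Rightarrow> 'v \<Rightarrow> 'v \<Rightarrow> bool" where
  "sends_reject R B pref s b r \<longleftrightarrow> b \<in> B \<and> proposers R s b \<noteq> {} \<and>
     r \<in> proposers R s b \<and> r \<noteq> blue_choice R pref s b"

definition sends_break :: "'v set \<Rightarrow> 'v set \<Rightarrow> ('v \<Rightarrow> 'v list) \<Rightarrow> ('v, 'z) gs_state_scheme \<Rightarrow> 'v \<Rightarrow> 'v \<Rightarrow> bool" where
  "sends_break R B pref s b r \<longleftrightarrow> b \<in> B \<and> proposers R s b \<noteq> {} \<and>
     prt s b = Some r \<and> Some (blue_choice R pref s b) \<noteq> prt s b"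

text \<open>Red turn, steps (1) and (2): result is (new p(r), new C(r), set of removed nodes).\<close>
definition red_step1 :: "'v set \<Rightarrow> 'v set \<Rightarrow> ('v \<Rightarrow> 'v list) \<Rightarrow> ('v, 'z) gs_state_scheme \<Rightarrow> 'v
     \<Rightarrow> 'v option \<times> 'v list \<times> 'v set" where
  "red_step1 R B pref s r =
     (case cnd s r of
        None \<Rightarrow> (prt s r, lst s r, {})
      | Some b \<Rightarrow>
          if sends_accept R B pref s b r then (Some b, lst s r, {})
          else if sends_reject R B pref s b r then (prt s r, removeAll b (lst s r), {b})
          else (prt s r, lst s r, {}))"

definition red_step2 :: "'v set \<Rightarrow> 'v set \<Rightarrow> ('v \<Rightarrow> 'v list) \<Rightarrow> ('v, 'z) gs_state_scheme \<Rightarrow> 'v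
     \<Rightarrow> 'v option \<times> 'v list \<times> 'v set" where
  "red_step2 R B pref s r =
     (case red_step1 R B pref s r of (p1, C1, D1) \<Rightarrow>
        (case p1 of
           None \<Rightarrow> (p1, C1, D1)
         | Some b' \<Rightarrow>
             if sends_break R B pref s b' r then (None, removeAll b' C1, insert b' D1)
             else (p1, C1, D1)))"

text \<open>One round = blue turn followed by red turn (step (3) sets the new candidate).\<close>
definition gs_round :: "'v set \<Rightarrow> 'v set \<Rightarrow> ('v \<Rightarrow> 'v list) \<Rightarrow> 'v gs_state \<Rightarrow> 'v gs_state" where
  "gs_round R B pref s =
     \<lparr> prt = (\<lambda>v. if v \<in> B then
                    (if proposers R s v \<noteq> {} then Some (blue_choice R pref s v) else prt s v)
                  else if v \<in> R then fst (red_step2 R B pref s v)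
                  else prt s v),
       lst = (\<lambda>v. if v \<in> R then fst (snd (red_step2 R B pref s v)) else lst s v),
       cnd = (\<lambda>v. if v \<in> R then
                    (if fst (red_step2 R B pref s v) = None \<and> fst (snd (red_step2 R B pref s v)) \<noteq> []
                     then Some (hd (fst (snd (red_step2 R B pref s v)))) else None)
                  else cnd s v),
       lost = lost s \<union> {{r, b} | r b. r \<in> R \<and> b \<in> snd (snd (red_step2 R B pref s r))} \<rparr>"

definition gs_init :: "('v \<Rightarrow> 'v list) \<Rightarrow> 'v gs_state" where
  "gs_init pref = \<lparr> prt = (\<lambda>_. None), lst = pref, cnd = (\<lambda>_. None), lost = {} \<rparr>"

text \<open>State at the end of round i (i = 0: initial state).\<close>
definition gs_state :: "'v set \<Rightarrow> 'v set \<Rightarrow> ('v \<Rightarrow> 'v list) \<Rightarrow> nat \<Rightarrow> 'v gs_state" where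
  "gs_state R B pref i = (gs_round R B pref ^^ i) (gs_init pref)"

definition potential :: "('v set \<Rightarrow> int) \<Rightarrow> 'v gs_state \<Rightarrow> 'v \<Rightarrow> int" where
  "potential w s r = (if prt s r \<noteq> None \<or> lst s r = [] then 0 else w {r, hd (lst s r)})"

end

theory Submission
  imports Defs
begin


lemma filter_hd_idx:
  "filter P xs = a # ys \<Longrightarrow> c \<in> set ys \<Longrightarrow> \<exists>i j. i < j \<and> j < length xs \<and> xs ! i = a \<and> xs ! j = c"
proof (induction xs arbitrary: ys)
  case Nil then show ?case by simp
next
  case (Cons x xs)
  show ?case
  proof (cases "P x")
    case True
    with Cons.prems have "a = x" "ys = filter P xs" by auto
    with Cons.prems obtain j where "j < length xs" "xs ! j = c"
      by (metis filter_is_subset in_set_conv_nth subsetD)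
    with \<open>a = x\<close> show ?thesis by (intro exI[of _ 0] exI[of _ "Suc j"]) auto
  next
    case False
    with Cons.prems have "filter P xs = a # ys" by auto
    from Cons.IH[OF this Cons.prems(2)] obtain i j where "i < j \<and> j < length xs \<and> xs ! i = a \<and> xs ! j = c" by blast
    then show ?thesis by (intro exI[of _ "Suc i"] exI[of _ "Suc j"]) auto
  qed
qed

lemma prefers_asym:
  assumes "distinct (pref v)" "prefers pref v x y" "prefers pref v y x" shows False
proof -
  from assms(2) obtain i j where a: "i < j" "j < length (pref v)" "pref v ! i = x" "pref v ! j = y"
    unfolding prefers_def by blast
  from assms(3) obtain i' j' where b: "i' < j'" "j' < length (pref v)" "pref v ! i' = y" "pref v ! j' = x"
    unfolding prefers_def by blast
  have "i = j'" using nth_eq_iff_index_eq[OF assms(1), of i j'] a b by simp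
  moreover have "j = i'" using nth_eq_iff_index_eq[OF assms(1), of j i'] a b by simp
  ultimately show False using a b by simp
qed

lemma mp_in:
  assumes d: "distinct (pref b)" and sub: "X \<subseteq> set (pref b)" and ne: "X \<noteq> {}"
  shows "most_preferred pref b X \<in> X"
proof -
  obtain z where "z \<in> X" using ne by blast
  then have "z \<in> set (filter (\<lambda>x. x \<in> X) (pref b))" using sub by auto
  then have "filter (\<lambda>x. x \<in> X) (pref b) \<noteq> []" by (metis empty_iff list.set(1))
  then obtain q ys where f: "filter (\<lambda>x. x \<in> X) (pref b) = q # ys" using list.exhaust by blast
  have "q \<in> set (filter (\<lambda>x. x \<in> X) (pref b))" using f by simp
  then have qX: "q \<in> X" by simp
  have P: "\<forall>y\<in>X. y \<noteq> q \<longrightarrow> prefers pref b q y"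
  proof (intro ballI impI)
    fix y assume "y \<in> X" "y \<noteq> q"
    then have "y \<in> set (filter (\<lambda>x. x \<in> X) (pref b))" using sub by auto
    then have "y \<in> set ys" using f \<open>y \<noteq> q\<close> by simp
    from filter_hd_idx[OF f this] show "prefers pref b q y" unfolding prefers_def by blast
  qed
  have "most_preferred pref b X = q"
    unfolding most_preferred_def
  proof (rule the_equality)
    show "q \<in> X \<and> (\<forall>y\<in>X. y \<noteq> q \<longrightarrow> prefers pref b q y)" using qX P by blast
  next
    fix q' assume "q' \<in> X \<and> (\<forall>y\<in>X. y \<noteq> q' \<longrightarrow> prefers pref b q' y)"
    then have H1: "q' \<in> X" and H2: "\<forall>y\<in>X. y \<noteq> q' \<longrightarrow> prefers pref b q' y" by auto
    show "q' = q"
    proof (rule ccontr)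
      assume ne: "q' \<noteq> q"
      have "prefers pref b q q'" using P H1 ne by auto
      moreover have "prefers pref b q' q" using H2 qX ne by auto
      ultimately show False using prefers_asym[of pref b, OF d] by blast
    qed
  qed
  then show ?thesis using qX by simp
qed

lemma removeAll_filter: "removeAll x (filter (\<lambda>y. y \<in> A) xs) = filter (\<lambda>y. y \<in> A - {x}) xs"
  by (induction xs) auto

lemma accept_not_break: "sends_accept R B pref s b r \<Longrightarrow> \<not> sends_break R B pref s b r"
  by (auto simp: sends_accept_def sends_break_def)

lemma step2_out:
  assumes "\<forall>b. cnd s r = Some b \<longrightarrow> prt s r = None"
  shows "(cnd s r = None \<and> prt s r = None \<and> red_step2 R B pref s r = (None, lst s r, {}))
  \<or> (\<exists>b0. cnd s r = None \<and> prt s r = Some b0 \<and> \<not> sends_break R B pref s b0 r \<and> red_step2 R B pref s r = (Some b0, lst s r, {}))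
  \<or> (\<exists>b0. cnd s r = None \<and> prt s r = Some b0 \<and> sends_break R B pref s b0 r \<and> red_step2 R B pref s r = (None, removeAll b0 (lst s r), {b0}))
  \<or> (\<exists>b. cnd s r = Some b \<and> prt s r = None \<and> sends_accept R B pref s b r \<and> red_step2 R B pref s r = (Some b, lst s r, {}))
  \<or> (\<exists>b. cnd s r = Some b \<and> prt s r = None \<and> \<not> sends_accept R B pref s b r \<and> sends_reject R B pref s b r \<and> red_step2 R B pref s r = (None, removeAll b (lst s r), {b}))
  \<or> (\<exists>b. cnd s r = Some b \<and> prt s r = None \<and> \<not> sends_accept R B pref s b r \<and> \<not> sends_reject R B pref s b r \<and> red_step2 R B pref s r = (None, lst s r, {}))"
proof (cases "cnd s r")
  case None
  show ?thesis
  proof (cases "prt s r")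
    case None
    then show ?thesis using \<open>cnd s r = None\<close> by (simp add: red_step2_def red_step1_def)
  next
    case (Some b0)
    then show ?thesis using \<open>cnd s r = None\<close>
      by (cases "sends_break R B pref s b0 r") (simp_all add: red_step2_def red_step1_def)
  qed
next
  case (Some b)
  with assms have p: "prt s r = None" by simp
  show ?thesis
  proof (cases "sends_accept R B pref s b r")
    case True
    then have "\<not> sends_break R B pref s b r" by (rule accept_not_break)
    then show ?thesis using True Some p by (simp add: red_step2_def red_step1_def)
  next
    case False
    then show ?thesis using Some p
      by (cases "sends_reject R B pref s b r") (simp_all add: red_step2_def red_step1_def)
  qed
qed



locale gs =
  fixes R B :: "'v set" and E :: "'v set set" and pref :: "'v \<Rightarrow> 'v list"
    and w :: "'v set \<Rightarrow> int"
  assumes disj: "R \<inter> B = {}"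
    and edges: "\<forall>e\<in>E. \<exists>r b. r \<in> R \<and> b \<in> B \<and> e = {r, b}"
    and finE: "finite E"
    and no_isolated: "\<forall>v\<in>R \<union> B. \<exists>e\<in>E. v \<in> e"
    and pref_dist: "\<forall>v\<in>R \<union> B. distinct (pref v)"
    and pref_set: "\<forall>v\<in>R \<union> B. set (pref v) = {u. {v, u} \<in> E}"
    and w_pos: "\<forall>e\<in>E. w e > 0"
    and w_resp: "\<forall>v\<in>R \<union> B. \<forall>x y. prefers pref v x y \<longrightarrow> w {v, x} \<ge> w {v, y}"
begin

lemma edge:
  assumes "r \<in> R" "x \<in> set (pref r)" shows "{r, x} \<in> E" "x \<in> B"
proof -
  show e: "{r, x} \<in> E" using assms pref_set by auto
  then obtain r' b' where "r' \<in> R" "b' \<in> B" "{r, x} = {r', b'}" using edges by blast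
  then show "x \<in> B" using assms(1) disj by (metis IntI doubleton_eq_iff empty_iff)
qed

lemma edge_sym: assumes "r \<in> R" "x \<in> set (pref r)" shows "r \<in> set (pref x)"
proof -
  have "{r, x} \<in> E" "x \<in> B" using edge[OF assms] by auto
  then show ?thesis using pref_set by (auto simp: insert_commute)
qed

definition Inv :: "'v gs_state \<Rightarrow> bool" where
"Inv s \<longleftrightarrow> (\<forall>r\<in>R. (\<exists>A. lst s r = filter (\<lambda>x. x \<in> A) (pref r))
     \<and> (\<forall>b. cnd s r = Some b \<longrightarrow> prt s r = None \<and> lst s r \<noteq> [] \<and> b = hd (lst s r))
     \<and> (\<forall>b. prt s r = Some b \<longrightarrow> lst s r \<noteq> [] \<and> b = hd (lst s r)))
 \<and> (\<forall>b\<in>B. \<forall>x. prt s b = Some x \<longrightarrow> x \<in> R \<and> prt s x = Some b)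
 \<and> (\<forall>e\<in>lost s. \<exists>r b. r \<in> R \<and> b \<in> B \<and> e = {r, b} \<and> e \<in> E \<and> b \<notin> set (lst s r))"

lemma rnd_red:
  assumes "r \<in> R"
  shows "prt (gs_round R B pref s) r = fst (red_step2 R B pref s r)"
    "lst (gs_round R B pref s) r = fst (snd (red_step2 R B pref s r))"
    "cnd (gs_round R B pref s) r = (if fst (red_step2 R B pref s r) = None \<and> fst (snd (red_step2 R B pref s r)) \<noteq> []
                     then Some (hd (fst (snd (red_step2 R B pref s r)))) else None)"
  using assms disj by (auto simp: gs_round_def)

lemma rnd_blue:
  assumes "b \<in> B"
  shows "prt (gs_round R B pref s) b = (if proposers R s b \<noteq> {} then Some (blue_choice R pref s b) else prt s b)"
  using assms by (auto simp: gs_round_def)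

lemma rnd_lost:
  "lost (gs_round R B pref s) = lost s \<union> {{r, b} | r b. r \<in> R \<and> b \<in> snd (snd (red_step2 R B pref s r))}"
  by (simp add: gs_round_def)

lemma lst_in_pref: "Inv s \<Longrightarrow> r \<in> R \<Longrightarrow> x \<in> set (lst s r) \<Longrightarrow> x \<in> set (pref r)"
  unfolding Inv_def by fastforce

lemma out:
  assumes "Inv s" "r \<in> R"
  shows "(cnd s r = None \<and> prt s r = None \<and> red_step2 R B pref s r = (None, lst s r, {}))
  \<or> (\<exists>b0. cnd s r = None \<and> prt s r = Some b0 \<and> \<not> sends_break R B pref s b0 r \<and> red_step2 R B pref s r = (Some b0, lst s r, {}))
  \<or> (\<exists>b0. cnd s r = None \<and> prt s r = Some b0 \<and> sends_break R B pref s b0 r \<and> red_step2 R B pref s r = (None, removeAll b0 (lst s r), {b0}))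
  \<or> (\<exists>b. cnd s r = Some b \<and> prt s r = None \<and> sends_accept R B pref s b r \<and> red_step2 R B pref s r = (Some b, lst s r, {}))
  \<or> (\<exists>b. cnd s r = Some b \<and> prt s r = None \<and> \<not> sends_accept R B pref s b r \<and> sends_reject R B pref s b r \<and> red_step2 R B pref s r = (None, removeAll b (lst s r), {b}))
  \<or> (\<exists>b. cnd s r = Some b \<and> prt s r = None \<and> \<not> sends_accept R B pref s b r \<and> \<not> sends_reject R B pref s b r \<and> red_step2 R B pref s r = (None, lst s r, {}))"
  by (rule step2_out) (use assms in \<open>auto simp: Inv_def\<close>)

lemma step2_lst_sub:
  assumes "Inv s" "r \<in> R"
  shows "set (fst (snd (red_step2 R B pref s r))) \<subseteq> set (lst s r)"
  using out[OF assms] by auto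

lemma step2_lost:
  assumes "Inv s" "r \<in> R" "b \<in> snd (snd (red_step2 R B pref s r))"
  shows "lst s r \<noteq> [] \<and> b = hd (lst s r) \<and> fst (snd (red_step2 R B pref s r)) = removeAll b (lst s r)"
  using out[OF assms(1,2)] assms unfolding Inv_def by auto

end


context gs begin

lemma Inv_init: "Inv (gs_init pref)"
  unfolding Inv_def gs_init_def by (auto intro: exI[of _ UNIV])

lemma Inv_red:
  assumes I: "Inv s" and r: "r \<in> R"
  shows "(\<exists>A. lst (gs_round R B pref s) r = filter (\<lambda>x. x \<in> A) (pref r))
     \<and> (\<forall>b. cnd (gs_round R B pref s) r = Some b \<longrightarrow> prt (gs_round R B pref s) r = None \<and> lst (gs_round R B pref s) r \<noteq> [] \<and> b = hd (lst (gs_round R B pref s) r))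
     \<and> (\<forall>b. prt (gs_round R B pref s) r = Some b \<longrightarrow> lst (gs_round R B pref s) r \<noteq> [] \<and> b = hd (lst (gs_round R B pref s) r))"
proof -
  obtain A where A: "lst s r = filter (\<lambda>x. x \<in> A) (pref r)" using I r unfolding Inv_def by blast
  have C: "\<And>b. cnd s r = Some b \<Longrightarrow> prt s r = None \<and> lst s r \<noteq> [] \<and> b = hd (lst s r)"
    using I r unfolding Inv_def by blast
  have P: "\<And>b. prt s r = Some b \<Longrightarrow> lst s r \<noteq> [] \<and> b = hd (lst s r)"
    using I r unfolding Inv_def by blast
  have 1: "\<exists>A. lst (gs_round R B pref s) r = filter (\<lambda>x. x \<in> A) (pref r)"
  proof -
    have "fst (snd (red_step2 R B pref s r)) = lst s r \<or> (\<exists>x. fst (snd (red_step2 R B pref s r)) = removeAll x (lst s r))"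
      using out[OF I r] by auto
    then obtain A' where "fst (snd (red_step2 R B pref s r)) = filter (\<lambda>y. y \<in> A') (pref r)"
      using A removeAll_filter by metis
    then show ?thesis unfolding rnd_red[OF r] by blast
  qed
  have 2: "\<forall>b. cnd (gs_round R B pref s) r = Some b \<longrightarrow> prt (gs_round R B pref s) r = None \<and> lst (gs_round R B pref s) r \<noteq> [] \<and> b = hd (lst (gs_round R B pref s) r)"
    unfolding rnd_red[OF r] by auto
  have 3: "\<forall>b. prt (gs_round R B pref s) r = Some b \<longrightarrow> lst (gs_round R B pref s) r \<noteq> [] \<and> b = hd (lst (gs_round R B pref s) r)"
    using out[OF I r] unfolding rnd_red[OF r]
    by (elim disjE exE conjE) (simp_all add: C P)
  show ?thesis using 1 2 3 by blast
qed

lemma partner_in_pref: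
  assumes I: "Inv s" and b: "b \<in> B"
  shows "proposers R s b \<union> set_option (prt s b) \<subseteq> set (pref b)"
proof
  fix y assume y: "y \<in> proposers R s b \<union> set_option (prt s b)"
  have "y \<in> R \<and> lst s y \<noteq> [] \<and> b = hd (lst s y)"
  proof (cases "y \<in> proposers R s b")
    case True
    then have "y \<in> R" "cnd s y = Some b" by (auto simp: proposers_def)
    then show ?thesis using I unfolding Inv_def by blast
  next
    case False
    then have "prt s b = Some y" using y by auto
    then have "y \<in> R" "prt s y = Some b" using I b unfolding Inv_def by blast+
    then show ?thesis using I unfolding Inv_def by blast
  qed
  then have "y \<in> R" "b \<in> set (pref y)" using lst_in_pref[OF I, of y b] by auto
  then show "y \<in> set (pref b)" by (rule edge_sym)
qed

lemma Inv_blue: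
  assumes I: "Inv s" and b: "b \<in> B" and x: "prt (gs_round R B pref s) b = Some x"
  shows "x \<in> R \<and> prt (gs_round R B pref s) x = Some b"
proof (cases "proposers R s b \<noteq> {}")
  case True
  have xb: "x = blue_choice R pref s b" using x True unfolding rnd_blue[OF b] by simp
  have "x \<in> proposers R s b \<union> set_option (prt s b)"
    unfolding xb blue_choice_def
    by (rule mp_in) (use pref_dist b partner_in_pref[OF I b] True in auto)
  show ?thesis
  proof (cases "prt s b = Some x")
    case True
    then have xR: "x \<in> R" and px: "prt s x = Some b" using I b unfolding Inv_def by blast+
    have "\<not> sends_break R B pref s b x" using True xb by (simp add: sends_break_def)
    then show ?thesis using out[OF I xR] px xR unfolding rnd_red[OF xR] by auto
  next
    case False
    with \<open>x \<in> _\<close> have "x \<in> proposers R s b" by auto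
    then have xR: "x \<in> R" and cx: "cnd s x = Some b" by (auto simp: proposers_def)
    have acc: "sends_accept R B pref s b x" using b \<open>proposers R s b \<noteq> {}\<close> False xb
      by (simp add: sends_accept_def)
    show ?thesis using out[OF I xR] cx acc xR unfolding rnd_red[OF xR] by auto
  qed
next
  case False
  then have "prt s b = Some x" using x unfolding rnd_blue[OF b] by simp
  then have xR: "x \<in> R" and px: "prt s x = Some b" using I b unfolding Inv_def by blast+
  have "\<not> sends_break R B pref s b x" using False by (simp add: sends_break_def)
  then show ?thesis using out[OF I xR] px xR unfolding rnd_red[OF xR] by auto
qed

lemma Inv_lost:
  assumes I: "Inv s" and e: "e \<in> lost (gs_round R B pref s)"
  shows "\<exists>r b. r \<in> R \<and> b \<in> B \<and> e = {r, b} \<and> e \<in> E \<and> b \<notin> set (lst (gs_round R B pref s) r)"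
proof (cases "e \<in> lost s")
  case True
  then obtain r b where rb: "r \<in> R" "b \<in> B" "e = {r, b}" "e \<in> E" "b \<notin> set (lst s r)"
  proof -
    have "\<forall>e\<in>lost s. \<exists>r b. r \<in> R \<and> b \<in> B \<and> e = {r, b} \<and> e \<in> E \<and> b \<notin> set (lst s r)"
      using I unfolding Inv_def by (elim conjE)
    then show ?thesis using True that by blast
  qed
  have "set (lst (gs_round R B pref s) r) \<subseteq> set (lst s r)"
    unfolding rnd_red[OF rb(1)] by (rule step2_lst_sub[OF I rb(1)])
  then show ?thesis using rb by (intro exI[of _ r] exI[of _ b]) blast
next
  case False
  then obtain r b where rb: "r \<in> R" "b \<in> snd (snd (red_step2 R B pref s r))" "e = {r, b}"
    using e unfolding rnd_lost by blast
  from step2_lost[OF I rb(1,2)] have h: "lst s r \<noteq> []" "b = hd (lst s r)"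
    "fst (snd (red_step2 R B pref s r)) = removeAll b (lst s r)" by auto
  have "b \<in> set (pref r)" using lst_in_pref[OF I rb(1)] h by simp
  then have "{r, b} \<in> E" "b \<in> B" using edge rb(1) by auto
  moreover have "b \<notin> set (lst (gs_round R B pref s) r)"
    unfolding rnd_red[OF rb(1)] h(3) by simp
  ultimately show ?thesis using rb by blast
qed

lemma Inv_step: assumes "Inv s" shows "Inv (gs_round R B pref s)"
  unfolding Inv_def[of "gs_round R B pref s"]
  apply (intro conjI)
  subgoal using Inv_red[OF assms] by blast
  subgoal using Inv_blue[OF assms] by blast
  subgoal using Inv_lost[OF assms] by blast
  done

lemma Inv_state: "Inv (gs_state R B pref n)"
  by (induction n) (simp_all add: gs_state_def Inv_init Inv_step)

end


context gs begin

lemma lostD: "Inv s \<Longrightarrow> \<forall>e\<in>lost s. \<exists>r b. r \<in> R \<and> b \<in> B \<and> e = {r, b} \<and> e \<in> E \<and> b \<notin> set (lst s r)"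
  unfolding Inv_def by (elim conjE)

lemma blueD: "Inv s \<Longrightarrow> b \<in> B \<Longrightarrow> prt s b = Some x \<Longrightarrow> x \<in> R \<and> prt s x = Some b"
  unfolding Inv_def by blast

lemma redD: "Inv s \<Longrightarrow> r \<in> R \<Longrightarrow> (\<exists>A. lst s r = filter (\<lambda>x. x \<in> A) (pref r))
     \<and> (\<forall>b. cnd s r = Some b \<longrightarrow> prt s r = None \<and> lst s r \<noteq> [] \<and> b = hd (lst s r))
     \<and> (\<forall>b. prt s r = Some b \<longrightarrow> lst s r \<noteq> [] \<and> b = hd (lst s r))"
  unfolding Inv_def by blast

lemma weight_drop:
  assumes I: "Inv s" and r: "r \<in> R" and ne: "lst s r \<noteq> []"
    and ne2: "removeAll (hd (lst s r)) (lst s r) \<noteq> []"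
  shows "w {r, hd (removeAll (hd (lst s r)) (lst s r))} \<le> w {r, hd (lst s r)}"
proof -
  obtain A where A: "lst s r = filter (\<lambda>x. x \<in> A) (pref r)" using redD[OF I r] by blast
  obtain a ys where f: "lst s r = a # ys" using ne list.exhaust by blast
  have d: "distinct (pref r)" using pref_dist r by blast
  then have "distinct (lst s r)" using A by simp
  then have "a \<notin> set ys" using f by simp
  then have ra: "removeAll (hd (lst s r)) (lst s r) = ys" using f by simp
  then have "ys \<noteq> []" using ne2 by simp
  then have "hd ys \<in> set ys" by simp
  from filter_hd_idx[OF A[symmetric, unfolded f] this] have "prefers pref r a (hd ys)"
    unfolding prefers_def by blast
  then show ?thesis using w_resp r ra f by simp
qed

lemma common:
  assumes I: "Inv s" and r: "r \<in> R" and ne: "lst s r \<noteq> []" and bh: "b = hd (lst s r)"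
    and D: "b \<in> snd (snd (red_step2 R B pref s r))"
    and L: "lst (gs_round R B pref s) r = removeAll b (lst s r)"
    and ne2: "lst (gs_round R B pref s) r \<noteq> []"
  shows "\<exists>b\<in>B. {r, b} \<in> lost (gs_round R B pref s) \<and> {r, b} \<notin> lost s
     \<and> w {r, hd (lst (gs_round R B pref s) r)} \<le> w {r, b}"
proof -
  have bl: "b \<in> set (lst s r)" using ne bh by simp
  then have "b \<in> set (pref r)" using lst_in_pref[OF I r] by blast
  then have bB: "b \<in> B" using edge r by blast
  have l1: "{r, b} \<in> lost (gs_round R B pref s)" unfolding rnd_lost using r D by blast
  have l2: "{r, b} \<notin> lost s"
  proof
    assume "{r, b} \<in> lost s"
    then obtain r' b' where h: "r' \<in> R" "b' \<in> B" "{r, b} = {r', b'}" "b' \<notin> set (lst s r')"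
      using lostD[OF I] by blast
    have "r = r' \<and> b = b'" using h(1,2,3) r bB disj by (metis IntI doubleton_eq_iff empty_iff)
    then show False using h(4) bl by simp
  qed
  have "w {r, hd (lst (gs_round R B pref s) r)} \<le> w {r, b}"
    using weight_drop[OF I r ne] ne2 unfolding L bh by simp
  then show ?thesis using bB l1 l2 by blast
qed

lemma key:
  assumes I: "Inv s" and CD: "\<forall>r\<in>R. prt s r = None \<and> lst s r \<noteq> [] \<longrightarrow> cnd s r \<noteq> None"
    and r: "r \<in> R" and pz: "potential w (gs_round R B pref s) r \<noteq> 0"
  shows "\<exists>b\<in>B. {r, b} \<in> lost (gs_round R B pref s) \<and> {r, b} \<notin> lost s
     \<and> potential w (gs_round R B pref s) r \<le> w {r, b}"
proof -
  let ?s' = "gs_round R B pref s"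
  have p': "prt ?s' r = None" and l': "lst ?s' r \<noteq> []"
    and pv: "potential w ?s' r = w {r, hd (lst ?s' r)}"
    using pz unfolding potential_def by (auto split: if_splits)
  have R1: "\<And>b. cnd s r = Some b \<Longrightarrow> prt s r = None \<and> lst s r \<noteq> [] \<and> b = hd (lst s r)"
    and R2: "\<And>b. prt s r = Some b \<Longrightarrow> lst s r \<noteq> [] \<and> b = hd (lst s r)"
    using redD[OF I r] by blast+
  note rr = rnd_red[OF r]
  from out[OF I r] show ?thesis
  proof (elim disjE exE conjE)
    assume "cnd s r = None" "prt s r = None" "red_step2 R B pref s r = (None, lst s r, {})"
    then show ?thesis using CD r l' unfolding rr by auto
  next
    fix b0 assume "red_step2 R B pref s r = (Some b0, lst s r, {})"
    then show ?thesis using p' unfolding rr by simp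
  next
    fix b0 assume a: "prt s r = Some b0" "red_step2 R B pref s r = (None, removeAll b0 (lst s r), {b0})"
    show ?thesis using common[OF I r, of b0] R2[OF a(1)] a(2) l' pv unfolding rr by simp
  next
    fix b assume "red_step2 R B pref s r = (Some b, lst s r, {})"
    then show ?thesis using p' unfolding rr by simp
  next
    fix b assume a: "cnd s r = Some b" "red_step2 R B pref s r = (None, removeAll b (lst s r), {b})"
    show ?thesis using common[OF I r, of b] R1[OF a(1)] a(2) l' pv unfolding rr by simp
  next
    fix b assume a: "cnd s r = Some b" "prt s r = None" "\<not> sends_accept R B pref s b r"
      "\<not> sends_reject R B pref s b r"
    have "b \<in> set (lst s r)" using R1[OF a(1)] by simp
    then have "b \<in> set (pref r)" using lst_in_pref[OF I r] by blast
    then have bB: "b \<in> B" using edge r by blast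
    have rp: "r \<in> proposers R s b" using r a(1) by (simp add: proposers_def)
    then have "r = blue_choice R pref s b" using a(4) bB by (auto simp: sends_reject_def)
    then have "prt s b = Some r" using a(3) bB rp by (auto simp: sends_accept_def)
    then have "prt s r = Some b" using blueD[OF I bB] by blast
    then show ?thesis using a(2) by simp
  qed
qed

lemma gs_state_Suc: "gs_state R B pref (Suc n) = gs_round R B pref (gs_state R B pref n)"
  by (simp add: gs_state_def)

lemma CD_round: "\<forall>r\<in>R. prt (gs_round R B pref s) r = None \<and> lst (gs_round R B pref s) r \<noteq> [] \<longrightarrow> cnd (gs_round R B pref s) r \<noteq> None"
  using rnd_red by simp

lemma finR: "finite R"
proof -
  have "R \<subseteq> \<Union>E" using no_isolated by blast
  moreover have "finite (\<Union>E)" using finE edges by (auto)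
  ultimately show ?thesis by (rule finite_subset)
qed

lemma main:
  assumes I: "Inv s" and CD: "\<forall>r\<in>R. prt s r = None \<and> lst s r \<noteq> [] \<longrightarrow> cnd s r \<noteq> None"
  shows "(\<Sum>r\<in>R. potential w (gs_round R B pref s) r)
     \<le> sum w (lost (gs_round R B pref s)) - sum w (lost s)"
proof -
  let ?s' = "gs_round R B pref s"
  let ?p = "potential w ?s'"
  define Rp where "Rp = {r \<in> R. ?p r \<noteq> 0}"
  define bs where "bs r = (SOME b. b \<in> B \<and> {r, b} \<in> lost ?s' \<and> {r, b} \<notin> lost s \<and> ?p r \<le> w {r, b})" for r
  have bs: "bs r \<in> B \<and> {r, bs r} \<in> lost ?s' \<and> {r, bs r} \<notin> lost s \<and> ?p r \<le> w {r, bs r}" if "r \<in> Rp" for r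
  proof -
    have "\<exists>b. b \<in> B \<and> {r, b} \<in> lost ?s' \<and> {r, b} \<notin> lost s \<and> ?p r \<le> w {r, b}"
      using key[OF I CD] that unfolding Rp_def by blast
    then show ?thesis unfolding bs_def by (rule someI_ex)
  qed
  define f where "f r = {r, bs r}" for r
  have finRp: "finite Rp" using finR unfolding Rp_def by simp
  have "sum ?p R = sum ?p Rp"
    by (rule sum.mono_neutral_right) (use finR in \<open>auto simp: Rp_def\<close>)
  also have "\<dots> \<le> sum (w \<circ> f) Rp"
    by (rule sum_mono) (use bs in \<open>auto simp: f_def\<close>)
  also have "\<dots> = sum w (f ` Rp)"
  proof -
    have "inj_on f Rp"
    proof
      fix x y assume xy: "x \<in> Rp" "y \<in> Rp" "f x = f y"
      have "x \<in> R" "y \<in> R" using xy Rp_def by auto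
      moreover have "bs x \<in> B" "bs y \<in> B" using bs xy by auto
      ultimately show "x = y" using xy(3) disj unfolding f_def
        by (metis IntI doubleton_eq_iff empty_iff)
    qed
    then show ?thesis by (simp add: sum.reindex)
  qed
  also have "\<dots> \<le> sum w (lost ?s' - lost s)"
  proof (rule sum_mono2)
    have "lost ?s' \<subseteq> E" using lostD[OF Inv_step[OF I]] by blast
    then show "finite (lost ?s' - lost s)" using finE by (meson finite_Diff finite_subset)
    show "f ` Rp \<subseteq> lost ?s' - lost s" using bs unfolding f_def by auto
    show "0 \<le> w b" if "b \<in> lost ?s' - lost s - f ` Rp" for b
      using that \<open>lost ?s' \<subseteq> E\<close> w_pos by (auto intro: less_imp_le)
  qed
  also have "\<dots> = sum w (lost ?s') - sum w (lost s)"
  proof (rule sum_diff)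
    have "lost ?s' \<subseteq> E" using lostD[OF Inv_step[OF I]] by blast
    then show "finite (lost ?s')" using finE by (meson finite_subset)
    show "lost s \<subseteq> lost ?s'" unfolding rnd_lost by blast
  qed
  finally show ?thesis .
qed

end

theorem lemma2:
  fixes R B :: "'v set" and E :: "'v set set" and pref :: "'v \<Rightarrow> 'v list"
    and w :: "'v set \<Rightarrow> int" and i :: nat
  assumes disj: "R \<inter> B = {}"
    and edges: "\<forall>e\<in>E. \<exists>r b. r \<in> R \<and> b \<in> B \<and> e = {r, b}"
    and finE: "finite E"
    and no_isolated: "\<forall>v\<in>R \<union> B. \<exists>e\<in>E. v \<in> e"
    and pref_dist: "\<forall>v\<in>R \<union> B. distinct (pref v)"
    and pref_set: "\<forall>v\<in>R \<union> B. set (pref v) = {u. {v, u} \<in> E}"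
    and w_pos: "\<forall>e\<in>E. w e > 0"
    and w_resp: "\<forall>v\<in>R \<union> B. \<forall>x y. prefers pref v x y \<longrightarrow> w {v, x} \<ge> w {v, y}"
    and i: "2 \<le> i"
  shows "(\<Sum>r\<in>R. potential w (gs_state R B pref i) r)
           \<le> sum w (lost (gs_state R B pref i)) - sum w (lost (gs_state R B pref (i - 1)))"
proof -
  interpret gs R B E pref w
    using assms by (unfold_locales) auto
  obtain n where n: "i = Suc (Suc n)" using i by (metis add_2_eq_Suc le_Suc_ex)
  let ?s = "gs_state R B pref (Suc n)"
  have "?s = gs_round R B pref (gs_state R B pref n)" by (rule gs_state_Suc)
  then have CD: "\<forall>r\<in>R. prt ?s r = None \<and> lst ?s r \<noteq> [] \<longrightarrow> cnd ?s r \<noteq> None"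
    using CD_round by metis
  have "(\<Sum>r\<in>R. potential w (gs_round R B pref ?s) r) \<le> sum w (lost (gs_round R B pref ?s)) - sum w (lost ?s)"
    by (rule main[OF Inv_state CD])
  then show ?thesis unfolding n gs_state_Suc[of "Suc n"] by simp
qed


end
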